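(* Let $\alpha\in(0,1]$ and let $n$ be such that $n^\alpha=2^q$ for a positive integer $q$. Let $p\in B_n$ and let $p'=p+v$ where $v$ is one of the vectors $(\pm n^\alpha,0)$, $(0,\pm n^\alpha)$. If $p'\in\mathrm{conv}(B_n)$, then $p'\in B_n$.
   Context: Let $A_n=\{(i,j)\in\mathbb{Z}^2: 0\le i,j\le 14n\}$. The sparse grid $B_n\subseteq A_n$ is the set of points of $A_n$ of at least one of the following forms: (1) $(i,j)$ with $n^\alpha \mid ij$; (2) $(i+k,j+k)$ with $n^\alpha\mid i$, $n^\alpha\mid j$, $k\in\{1,\dots,n^\alpha\}$; (3) $(i+k,j-k)$ with $n^\alpha\mid i$, $n^\alpha\mid j$, $k\in\{1,\dots,n^\alpha\}$. $\mathrm{conv}(B_n)$ denotes the convex hull of $B_n$. *)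

theory Defs
  imports "HOL-Analysis.Analysis"
begin

definition grid_A :: "nat \<Rightarrow> (int \<times> int) set" where
  "grid_A n = {(i, j). 0 \<le> i \<and> i \<le> 14 * int n \<and> 0 \<le> j \<and> j \<le> 14 * int n}"

text \<open>The sparse grid B_n, where the parameter m stands for n^alpha (an integer).\<close>
definition sparse_grid :: "nat \<Rightarrow> nat \<Rightarrow> (int \<times> int) set" where
  "sparse_grid n m = grid_A n \<inter>
     ({(i, j). int m dvd i * j}
      \<union> {(i + k, j + k) | i j k. int m dvd i \<and> int m dvd j \<and> 1 \<le> k \<and> k \<le> int m}
      \<union> {(i + k, j - k) | i j k. int m dvd i \<and> int m dvd j \<and> 1 \<le> k \<and> k \<le> int m})"

definition to_real2 :: "int \<times> int \<Rightarrow> real \<times> real" where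
  "to_real2 p = (real_of_int (fst p), real_of_int (snd p))"

end

theory Submission
  imports Defs
begin

definition U :: "int \<Rightarrow> (int \<times> int) set" where
  "U m = ({(i, j). m dvd i * j}
      \<union> {(i + k, j + k) | i j k. m dvd i \<and> m dvd j \<and> 1 \<le> k \<and> k \<le> m}
      \<union> {(i + k, j - k) | i j k. m dvd i \<and> m dvd j \<and> 1 \<le> k \<and> k \<le> m})"

lemma shiftx:
  assumes "m dvd d" "(a,b) \<in> U m" shows "(a+d,b) \<in> U m"
proof -
  consider "m dvd a*b" | i j k where "a = i+k" "b = j+k" "m dvd i" "m dvd j" "1 \<le> k" "k \<le> m"
    | i j k where "a = i+k" "b = j-k" "m dvd i" "m dvd j" "1 \<le> k" "k \<le> m"
    using assms(2) unfolding U_def by blast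
  then show ?thesis
  proof cases
    case 1
    have "(a+d)*b = a*b + d*b" by (simp add: algebra_simps)
    then have "m dvd (a+d)*b" using 1 assms(1) by simp
    then show ?thesis unfolding U_def by blast
  next
    case 2
    then have "(a+d,b) = ((i+d)+k, j+k) \<and> m dvd (i+d)" using assms(1) by simp
    then show ?thesis using 2 unfolding U_def by blast
  next
    case 3
    then have "(a+d,b) = ((i+d)+k, j-k) \<and> m dvd (i+d)" using assms(1) by simp
    then show ?thesis using 3 unfolding U_def by blast
  qed
qed

lemma shifty:
  assumes "m dvd d" "(a,b) \<in> U m" shows "(a,b+d) \<in> U m"
proof -
  consider "m dvd a*b" | i j k where "a = i+k" "b = j+k" "m dvd i" "m dvd j" "1 \<le> k" "k \<le> m"
    | i j k where "a = i+k" "b = j-k" "m dvd i" "m dvd j" "1 \<le> k" "k \<le> m"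
    using assms(2) unfolding U_def by blast
  then show ?thesis
  proof cases
    case 1
    have "a*(b+d) = a*b + a*d" by (simp add: algebra_simps)
    then have "m dvd a*(b+d)" using 1 assms(1) by simp
    then show ?thesis unfolding U_def by blast
  next
    case 2
    then have "(a,b+d) = (i+k, (j+d)+k) \<and> m dvd (j+d)" using assms(1) by simp
    then show ?thesis using 2 unfolding U_def by blast
  next
    case 3
    then have "(a,b+d) = (i+k, (j+d)-k) \<and> m dvd (j+d)" using assms(1) by simp
    then show ?thesis using 3 unfolding U_def by blast
  qed
qed

lemma sg_eq: "sparse_grid n m = grid_A n \<inter> U (int m)"
  unfolding sparse_grid_def U_def by simp

theorem lemma6:
  fixes \<alpha> :: real and n q :: nat and p v :: "int \<times> int"
  assumes "0 < \<alpha>" and "\<alpha> \<le> 1"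
    and "0 < q"
    and "real n powr \<alpha> = 2 ^ q"
    and "p \<in> sparse_grid n (2 ^ q)"
    and "v \<in> {(2 ^ q, 0), (- (2 ^ q), 0), (0, 2 ^ q), (0, - (2 ^ q))}"
    and "to_real2 (fst p + fst v, snd p + snd v) \<in> convex hull (to_real2 ` sparse_grid n (2 ^ q))"
  shows "(fst p + fst v, snd p + snd v) \<in> sparse_grid n (2 ^ q)"
proof -
  define S :: "(real \<times> real) set" where
    "S = {x. 0 \<le> fst x \<and> fst x \<le> 14 * real n \<and> 0 \<le> snd x \<and> snd x \<le> 14 * real n}"
  have cS: "convex S" unfolding S_def convex_def by (auto intro!: add_nonneg_nonneg convex_bound_le)
  have sub: "to_real2 ` sparse_grid n (2 ^ q) \<subseteq> S"
    unfolding S_def sparse_grid_def grid_A_def to_real2_def by auto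
  have "convex hull (to_real2 ` sparse_grid n (2 ^ q)) \<subseteq> S"
    by (rule hull_minimal[OF sub, of convex]) (rule cS)
  with assms(7) have "to_real2 (fst p + fst v, snd p + snd v) \<in> S" by blast
  then have A: "(fst p + fst v, snd p + snd v) \<in> grid_A n"
    unfolding S_def to_real2_def grid_A_def by simp
  obtain a b where pab: "p = (a,b)" by (cases p)
  have pU: "(a,b) \<in> U (2^q)" using assms(5) pab sg_eq by simp
  have "(a + fst v, b + snd v) \<in> U (2^q)"
    using assms(6) shiftx[OF _ pU, of "- (2^q)"] shifty[OF _ pU, of "- (2^q)"]
      shiftx[OF _ pU, of "2^q"] shifty[OF _ pU, of "2^q"] by auto
  then show ?thesis using A pab sg_eq by simp
qed

end
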